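(* Let $B=F(b_1,\ldots,b_n)$ be a Ferrers board with $0\le b_1\le\cdots\le b_n$. Then, as polynomials in $x$, $$x^n=\sum_{k=0}^n \mathbf{rT}_{n-k}(B,p,q)\,(x-F_{b_1}(p,q))(x-F_{b_2}(p,q))\cdots(x-F_{b_k}(p,q)),$$ where the empty product ($k=0$) equals 1.
   Context: For $m\ge 1$, a Fibonacci tiling of height $m$ is a tiling of a column of height $m$ by tiles of height 1 and height 2 whose bottom-most tile has height 1. For such a tiling $T$, $\mathrm{one}(T)$ and $\mathrm{two}(T)$ denote the numbers of tiles of height 1 and 2, and $F_m(p,q)=\sum_T q^{\mathrm{one}(T)}p^{\mathrm{two}(T)}$ over all Fibonacci tilings of height $m$ (so $F_1=q$, $F_2=q^2$, $F_m=qF_{m-1}+pF_{m-2}$ for $m\ge 3$). There are no Fibonacci tilings of height $0$, and $F_0(p,q)=0$. A Ferrers board $F(b_1,\ldots,b_n)$ is the board whose columns, from left to right, have heights $b_1,\ldots,b_n$. A Fibonacci rook placement of $k$ tilings in $B=F(b_1,\ldots,b_n)$ consists of a choice of columns $1\le i_1<\cdots<i_k\le n$ together with, for each $s=1,\ldots,k$, a Fibonacci tiling of height $b_{i_s-(s-1)}$ placed in column $i_s$ (the number of cells of column $i_s$ not canceled by earlier tilings, each tiling canceling top cells of columns to its right so that after $s$ tilings the untiled columns have $b_1,\ldots,b_{n-s}$ uncanceled cells). Its weight is $q^{a}p^{b}$ where $a$ (resp. $b$) is the total number of tiles of height 1 (resp. 2) used. $\mathbf{rT}_k(B,p,q)$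 is the sum of the weights of all Fibonacci rook placements of $k$ tilings in $B$ (the empty placement has weight 1). *)

theory Defs
  imports "HOL-Computational_Algebra.Polynomial"
begin

text \<open>A Fibonacci tiling of height m: list of tile heights (each 1 or 2), listed from
bottom to top, summing to m, whose bottom-most tile has height 1.\<close>
definition fib_tilings :: "nat \<Rightarrow> nat list set" where
  "fib_tilings m = {ts. set ts \<subseteq> {1,2} \<and> sum_list ts = m \<and> ts \<noteq> [] \<and> hd ts = 1}"

definition tiling_wt :: "'a::comm_ring_1 \<Rightarrow> 'a \<Rightarrow> nat list \<Rightarrow> 'a" where
  "tiling_wt p q ts = q ^ count_list ts 1 * p ^ count_list ts 2"

definition FibT :: "nat \<Rightarrow> 'a::comm_ring_1 \<Rightarrow> 'a \<Rightarrow> 'a" where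
  "FibT m p q = (\<Sum>ts\<in>fib_tilings m. tiling_wt p q ts)"

text \<open>Fibonacci rook placements of k tilings in the Ferrers board with column heights
b (b ! (i-1) is the height of column i).  A placement is a pair (cs, ts): cs is the strictly
increasing list of chosen columns i_1 < ... < i_k (1-based), and ts ! s (0-based s) is a
Fibonacci tiling of height b_{i_{s+1} - s} placed in column i_{s+1}.\<close>
definition fib_rook_placements :: "nat list \<Rightarrow> nat \<Rightarrow> (nat list \<times> nat list list) set" where
  "fib_rook_placements b k = {(cs, ts). length cs = k \<and> length ts = k \<and>
      sorted_wrt (<) cs \<and> set cs \<subseteq> {1..length b} \<and>
      (\<forall>s<k. ts ! s \<in> fib_tilings (b ! (cs ! s - s - 1)))}"

definition rT :: "nat list \<Rightarrow> nat \<Rightarrow> 'a::comm_ring_1 \<Rightarrow> 'a \<Rightarrow> 'a" where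
  "rT b k p q = (\<Sum>(cs, ts)\<in>fib_rook_placements b k. \<Prod>s<k. tiling_wt p q (ts ! s))"

end

theory Submission
  imports Defs
begin

lemma len_le_sum: "set ts \<subseteq> {1,2} \<Longrightarrow> length ts \<le> sum_list (ts::nat list)"
  by (induction ts) auto

lemma fin_tilings: "finite (fib_tilings m)"
proof (rule finite_subset)
  show "fib_tilings m \<subseteq> {xs. set xs \<subseteq> {1,2} \<and> length xs \<le> m}"
    using len_le_sum by (auto simp: fib_tilings_def)
  show "finite {xs. set xs \<subseteq> {1::nat,2} \<and> length xs \<le> m}"
    by (rule finite_lists_length_le) simp
qed

lemma placements0: "fib_rook_placements b 0 = {([],[])}"
  by (auto simp: fib_rook_placements_def)

lemma rT0: "rT b 0 p q = 1"
  by (simp add: rT_def placements0)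

lemma placements_len:
  assumes "(cs,ts) \<in> fib_rook_placements b k" shows "k \<le> length b"
proof -
  from assms have d: "distinct cs" and l: "length cs = k" and s: "set cs \<subseteq> {1..length b}"
    by (auto simp: fib_rook_placements_def strict_sorted_iff)
  have "k = card (set cs)" using d l by (simp add: distinct_card)
  also have "\<dots> \<le> card {1..length b}" by (rule card_mono[OF _ s]) simp
  finally show ?thesis by simp
qed

lemma rT_big: "length b < k \<Longrightarrow> rT b k p q = 0"
proof -
  assume "length b < k"
  then have "fib_rook_placements b k = {}" using placements_len by fastforce
  then show ?thesis by (simp add: rT_def)
qed

lemma decomp:
  "fib_rook_placements (b@[c]) (Suc k) = fib_rook_placements b (Suc k) \<union>
     (\<lambda>((cs,ts),t). (cs@[Suc (length b)], ts@[t])) `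
        (fib_rook_placements b k \<times> fib_tilings ((b@[c])!(length b - k)))"
  (is "?L = ?A \<union> ?f ` ?B")
proof
  show "?L \<subseteq> ?A \<union> ?f ` ?B"
  proof (rule subsetI)
    fix x assume Hx: "x \<in> ?L"
    obtain cs ts where xe: "x = (cs,ts)" by (cases x)
    have H: "(cs,ts) \<in> ?L" using Hx xe by simp
    show "x \<in> ?A \<union> ?f ` ?B"
    proof (cases "(cs,ts) \<in> ?A")
      case True then show ?thesis using xe by simp
    next
      case False
      note nA = False
    let ?n = "length b"
    from H have lc: "length cs = Suc k" and lt: "length ts = Suc k" and so: "sorted_wrt (<) cs"
      and st: "set cs \<subseteq> {1..Suc ?n}"
      and til: "\<And>s. s < Suc k \<Longrightarrow> ts!s \<in> fib_tilings ((b@[c]) ! (cs!s - s - 1))"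
      by (auto simp: fib_rook_placements_def)
    have mem: "cs!s \<in> {1..Suc ?n}" if "s < Suc k" for s using subsetD[OF st nth_mem, of s] lc that by simp
    have "(cs,ts) \<in> ?f ` ?B"
    proof (cases "Suc ?n \<in> set cs")
      case False
      have st': "set cs \<subseteq> {1..?n}" using st False by (auto simp: subset_iff le_Suc_eq)
      have "\<And>s. s < Suc k \<Longrightarrow> ts!s \<in> fib_tilings (b ! (cs!s - s - 1))"
      proof -
        fix s assume "s < Suc k"
        then have "cs!s \<in> {1..?n}" using subsetD[OF st' nth_mem, of s] lc by simp
        then have "cs!s - s - 1 < ?n" by auto
        then show "ts!s \<in> fib_tilings (b ! (cs!s - s - 1))"
          using til[OF \<open>s < Suc k\<close>] by (simp add: nth_append)
      qed
      then have "(cs,ts) \<in> ?A" using lc lt so st' by (auto simp: fib_rook_placements_def)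
      with nA show ?thesis by blast
    next
      case True
      then obtain i where i: "i < Suc k" "cs!i = Suc ?n" using lc by (metis in_set_conv_nth)
      have ik: "i = k"
      proof (rule ccontr)
        assume "i \<noteq> k" then have "i < k" using i by simp
        then have "cs!i < cs!k" using so lc sorted_wrt_nth_less by fastforce
        moreover have "cs!k \<le> Suc ?n" using mem[of k] by auto
        ultimately show False using i by simp
      qed
      have csk: "cs!k = Suc ?n" using i ik by simp
      have cseq: "cs = take k cs @ [Suc ?n]"
        using take_Suc_conv_app_nth[of k cs] lc csk by simp
      have tseq: "ts = take k ts @ [ts!k]"
        using take_Suc_conv_app_nth[of k ts] lt by simp
      have lt_k: "\<And>s. s < k \<Longrightarrow> cs!s < Suc ?n"
        using so lc csk sorted_wrt_nth_less by fastforce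
      have h1: "length (take k cs) = k" "length (take k ts) = k" using lc lt by auto
      have h2: "sorted_wrt (<) (take k cs)" using so by (simp add: sorted_wrt_take)
      have h3: "set (take k cs) \<subseteq> {1..?n}"
      proof
        fix x assume "x \<in> set (take k cs)"
        then obtain s where "s < k" "x = cs!s" using lc by (auto simp: in_set_conv_nth)
        then show "x \<in> {1..?n}" using lt_k[of s] mem[of s] by auto
      qed
      have h4: "\<forall>s<k. take k ts ! s \<in> fib_tilings (b ! (take k cs ! s - s - 1))"
      proof (intro allI impI)
        fix s assume s: "s < k"
        have "cs!s - s - 1 < ?n" using lt_k[OF s] mem[of s] s by auto
        then show "take k ts ! s \<in> fib_tilings (b ! (take k cs ! s - s - 1))"
          using til[of s] s by (simp add: nth_append)
      qed
      have B1: "(take k cs, take k ts) \<in> fib_rook_placements b k"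
        unfolding fib_rook_placements_def using h1 h2 h3 h4 by blast
      have B2: "ts!k \<in> fib_tilings ((b@[c])!(?n - k))"
        using til[of k] csk by simp
      have "(cs,ts) = ?f ((take k cs, take k ts), ts!k)"
        using cseq tseq by simp
      then show ?thesis using B1 B2 by blast
    qed
      then show ?thesis using xe by simp
    qed
  qed
next
  show "?A \<union> ?f ` ?B \<subseteq> ?L"
  proof
    fix x assume "x \<in> ?A \<union> ?f ` ?B"
    then show "x \<in> ?L"
    proof
      assume "x \<in> ?A"
      then obtain cs ts where x: "x = (cs,ts)" and lc: "length cs = Suc k" and lt: "length ts = Suc k"
        and so: "sorted_wrt (<) cs" and st: "set cs \<subseteq> {1..length b}"
        and til: "\<And>s. s < Suc k \<Longrightarrow> ts!s \<in> fib_tilings (b ! (cs!s - s - 1))"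
        by (auto simp: fib_rook_placements_def)
      have "\<And>s. s < Suc k \<Longrightarrow> ts!s \<in> fib_tilings ((b@[c]) ! (cs!s - s - 1))"
      proof -
        fix s assume s: "s < Suc k"
        then have "cs!s \<in> {1..length b}" using subsetD[OF st nth_mem, of s] lc by simp
        then have "cs!s - s - 1 < length b" by auto
        then show "ts!s \<in> fib_tilings ((b@[c]) ! (cs!s - s - 1))"
          using til[OF s] by (simp add: nth_append)
      qed
      moreover have "set cs \<subseteq> {1..Suc (length b)}" using st by auto
      ultimately show ?thesis using x lc lt so by (auto simp: fib_rook_placements_def)
    next
      assume "x \<in> ?f ` ?B"
      then obtain cs ts t where x: "x = (cs@[Suc (length b)], ts@[t])" and lc: "length cs = k" and lt: "length ts = k"
        and so: "sorted_wrt (<) cs" and st: "set cs \<subseteq> {1..length b}"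
        and til: "\<And>s. s < k \<Longrightarrow> ts!s \<in> fib_tilings (b ! (cs!s - s - 1))"
        and tt: "t \<in> fib_tilings ((b@[c])!(length b - k))"
        by (auto simp: fib_rook_placements_def)
      have so': "sorted_wrt (<) (cs@[Suc (length b)])"
        using so st by (auto simp: sorted_wrt_append)
      have st': "set (cs@[Suc (length b)]) \<subseteq> {1..Suc (length b)}" using st by auto
      have "\<And>s. s < Suc k \<Longrightarrow> (ts@[t])!s \<in> fib_tilings ((b@[c]) ! ((cs@[Suc (length b)])!s - s - 1))"
      proof -
        fix s assume s: "s < Suc k"
        show "(ts@[t])!s \<in> fib_tilings ((b@[c]) ! ((cs@[Suc (length b)])!s - s - 1))"
        proof (cases "s < k")
          case True
          then have "cs!s \<in> {1..length b}" using subsetD[OF st nth_mem, of s] lc by simp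
          then have "cs!s - s - 1 < length b" by auto
          then show ?thesis using til[OF True] True lc lt by (simp add: nth_append)
        next
          case False
          then have "s = k" using s by simp
          then show ?thesis using tt lc lt by (simp add: nth_append)
        qed
      qed
      then show ?thesis using x lc lt so' st' by (simp add: fib_rook_placements_def)
    qed
  qed
qed


lemma fin_pl: "finite (fib_rook_placements b k)"
proof (induction b arbitrary: k rule: rev_induct)
  case Nil
  show ?case
  proof (cases k)
    case 0 then show ?thesis by (simp add: placements0)
  next
    case (Suc m)
    then have "fib_rook_placements [] k = {}" using placements_len by fastforce
    then show ?thesis by simp
  qed
next
  case (snoc c b)
  show ?case
  proof (cases k)
    case 0 then show ?thesis by (simp add: placements0)
  next
    case (Suc m)
    show ?thesis unfolding Suc decomp using snoc.IH fin_tilings by blast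
  qed
qed

lemma recur: "rT (b@[c]) (Suc k) p q = rT b (Suc k) p q + FibT ((b@[c])!(length b - k)) p q * rT b k p q"
proof -
  let ?f = "(\<lambda>((cs,ts),t). (cs@[Suc (length b)], ts@[t])) :: (nat list \<times> nat list list) \<times> nat list \<Rightarrow> _"
  let ?A = "fib_rook_placements b (Suc k)"
  let ?T = "fib_tilings ((b@[c])!(length b - k))"
  let ?B = "fib_rook_placements b k \<times> ?T"
  define g :: "nat list \<times> nat list list \<Rightarrow> 'a" where "g = (\<lambda>(cs,ts). \<Prod>s<Suc k. tiling_wt p q (ts!s))"
  have disj: "?A \<inter> ?f ` ?B = {}"
    by (auto simp: fib_rook_placements_def)
  have inj: "inj_on ?f ?B" by (auto simp: inj_on_def)
  have finB: "finite ?B" using fin_pl fin_tilings by blast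
  have "rT (b@[c]) (Suc k) p q = sum g (?A \<union> ?f ` ?B)"
    unfolding rT_def decomp g_def by simp
  also have "\<dots> = sum g ?A + sum g (?f ` ?B)"
    by (rule sum.union_disjoint) (use fin_pl finB disj in auto)
  also have "sum g ?A = rT b (Suc k) p q" unfolding rT_def g_def by simp
  also have "sum g (?f ` ?B) = sum (g \<circ> ?f) ?B" by (rule sum.reindex[OF inj])
  also have "\<dots> = (\<Sum>(x,t)\<in>?B. (case x of (cs,ts) \<Rightarrow> \<Prod>s<k. tiling_wt p q (ts!s)) * tiling_wt p q t)"
  proof (rule sum.cong[OF refl])
    fix x assume "x \<in> ?B"
    then obtain cs ts t where x: "x = ((cs,ts),t)" and l: "length ts = k"
      by (auto simp: fib_rook_placements_def)
    have "(\<Prod>s<k. tiling_wt p q ((ts@[t])!s)) = (\<Prod>s<k. tiling_wt p q (ts!s))"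
      by (rule prod.cong) (auto simp: nth_append l)
    then show "(g \<circ> ?f) x = (case x of (x,t) \<Rightarrow> (case x of (cs,ts) \<Rightarrow> \<Prod>s<k. tiling_wt p q (ts!s)) * tiling_wt p q t)"
      using l nth_append_length[of ts t] by (simp add: x g_def)
  qed
  also have "\<dots> = (\<Sum>x\<in>fib_rook_placements b k. \<Sum>t\<in>?T. (case x of (cs,ts) \<Rightarrow> \<Prod>s<k. tiling_wt p q (ts!s)) * tiling_wt p q t)"
    by (rule sum.cartesian_product[symmetric])
  also have "\<dots> = rT b k p q * FibT ((b@[c])!(length b - k)) p q"
    unfolding rT_def FibT_def sum_product by simp
  finally show ?thesis by (simp add: mult.commute)
qed


lemma lin_step: "[:0,1:] * Q = Q * [:- a, 1:] + smult a (Q :: 'a::comm_ring_1 poly)"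
proof -
  have "[:- a, 1:] = [:0,1:] - [:a:]" by simp
  then have "Q * [:- a, 1:] = Q * [:0,1:] - smult a Q" by (simp add: algebra_simps)
  then show ?thesis by (simp add: algebra_simps)
qed

theorem theorem4:
  fixes b :: "nat list" and p q :: "'a::comm_ring_1"
  assumes "sorted b"
  shows "[:0, 1:] ^ length b =
    (\<Sum>k\<le>length b. smult (rT b (length b - k) p q) (\<Prod>i<k. [:- FibT (b ! i) p q, 1:]))"
proof (induction b rule: rev_induct)
  case Nil
  then show ?case by (simp add: rT0)
next
  case (snoc c b)
  let ?n = "length b"
  let ?x = "[:0,1:] :: 'a poly"
  define F where "F j = FibT ((b@[c])!j) p q" for j
  define P where "P j = (\<Prod>i<j. [:- F i, 1:])" for j
  define r where "r m = rT b m p q" for m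
  define r' where "r' m = rT (b@[c]) m p q" for m
  have IH: "?x ^ ?n = (\<Sum>j\<le>?n. smult (r (?n - j)) (P j))"
  proof -
    have "\<And>j. j \<le> ?n \<Longrightarrow> (\<Prod>i<j. [:- FibT (b ! i) p q, 1:]) = P j"
      unfolding P_def F_def by (rule prod.cong) (auto simp: nth_append)
    then show ?thesis using snoc.IH unfolding r_def by simp
  qed
  have Pstep: "?x * P j = P (Suc j) + smult (F j) (P j)" for j
    unfolding P_def by (simp add: lin_step)
  have rbig: "r (Suc ?n) = 0" unfolding r_def by (rule rT_big) simp
  have r0: "r 0 = 1" "r' 0 = 1" unfolding r_def r'_def by (simp_all add: rT0)
  have rec: "r' (Suc ?n - j) = r (Suc ?n - j) + F j * r (?n - j)" if "j \<le> ?n" for j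
  proof -
    have "Suc ?n - j = Suc (?n - j)" "?n - (?n - j) = j" using that by auto
    then show ?thesis unfolding r'_def r_def F_def using recur[of b c "?n - j" p q] by simp
  qed
  define S1 where "S1 = (\<Sum>j\<le>?n. smult (r (?n - j)) (P (Suc j)))"
  have e1: "(\<Sum>j\<le>Suc ?n. smult (r (Suc ?n - j)) (P j)) = S1"
    unfolding S1_def by (subst sum.atMost_Suc_shift) (simp add: rbig)
  have e2: "(\<Sum>j\<le>Suc ?n. smult (r (Suc ?n - j)) (P j)) =
      (\<Sum>j\<le>?n. smult (r (Suc ?n - j)) (P j)) + P (Suc ?n)"
    by (simp add: r0)
  have "?x ^ length (b@[c]) = ?x * ?x ^ ?n" by simp
  also have "\<dots> = (\<Sum>j\<le>?n. smult (r (?n - j)) (?x * P j))"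
    unfolding IH by (simp add: sum_distrib_left mult_smult_right)
  also have "\<dots> = (\<Sum>j\<le>?n. smult (r (?n - j)) (P (Suc j)) + smult (F j * r (?n - j)) (P j))"
    unfolding Pstep by (simp add: smult_add_right mult.commute)
  also have "\<dots> = S1 + (\<Sum>j\<le>?n. smult (F j * r (?n - j)) (P j))"
    unfolding S1_def by (simp add: sum.distrib)
  also have "\<dots> = (\<Sum>j\<le>?n. smult (r (Suc ?n - j)) (P j)) + P (Suc ?n) + (\<Sum>j\<le>?n. smult (F j * r (?n - j)) (P j))"
    using e1 e2 by simp
  also have "\<dots> = (\<Sum>j\<le>?n. smult (r' (Suc ?n - j)) (P j)) + smult (r' 0) (P (Suc ?n))"
    by (simp add: rec r0 sum.distrib smult_add_left)
  also have "\<dots> = (\<Sum>j\<le>Suc ?n. smult (r' (Suc ?n - j)) (P j))" by simp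
  finally show ?case unfolding r'_def P_def F_def by simp
qed

end
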